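(* Let $(L,\preceq,\bot,\top)$ be a bounded lattice with at least three elements and let $\{K_i\}_{i\in I}$ be a family of blocks of $L$ with $I$ a non-empty index set. If there exists $j\in I$ such that $K_j$ is a complete block and $\bigcup_{i\in I}K_i\subsetneq L$, then $\bigcup_{i\in I}K_i$ is a complete block of $L$.
   Context: For $k\in L$ let ${\uparrow}k=\{x\in L\mid k\preceq x\}$ and ${\downarrow}k=\{x\in L\mid x\preceq k\}$. A block of $L$ is a sublattice $K\subsetneq L$ (a proper subset) such that $K\setminus\{\bot,\top\}\neq\varnothing$ and $({\uparrow}k\cup{\downarrow}k)\setminus\{\bot,\top\}\subseteq K$ for every $k\in K\setminus\{\bot,\top\}$. A block $K$ is complete if $\bot,\top\in K$. *)

theory Defs
  imports Main
begin

text \<open>The bounded lattice L is the universe of a type of class bounded_lattice,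
  with order \<le>, bottom bot and top top.\<close>

definition sublattice :: "'a::lattice set \<Rightarrow> bool" where
  "sublattice K \<longleftrightarrow> (\<forall>x\<in>K. \<forall>y\<in>K. inf x y \<in> K \<and> sup x y \<in> K)"

definition is_block :: "'a::bounded_lattice set \<Rightarrow> bool" where
  "is_block K \<longleftrightarrow> sublattice K \<and> K \<subset> UNIV \<and> K - {bot, top} \<noteq> {} \<and>
     (\<forall>k \<in> K - {bot, top}. ({x. k \<le> x} \<union> {x. x \<le> k}) - {bot, top} \<subseteq> K)"

definition is_complete_block :: "'a::bounded_lattice set \<Rightarrow> bool" where
  "is_complete_block K \<longleftrightarrow> is_block K \<and> bot \<in> K \<and> top \<in> K"

end

theory Submission
  imports Defs
begin

theorem proposition17:
  fixes K :: "'i \<Rightarrow> 'a::bounded_lattice set" and I :: "'i set"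
  assumes three: "\<exists>a b c :: 'a. a \<noteq> b \<and> b \<noteq> c \<and> a \<noteq> c"
    and "I \<noteq> {}"
    and "\<forall>i\<in>I. is_block (K i)"
    and "\<exists>j\<in>I. is_complete_block (K j)"
    and "(\<Union>i\<in>I. K i) \<subset> UNIV"
  shows "is_complete_block (\<Union>i\<in>I. K i)"
proof -
  let ?U = "\<Union>i\<in>I. K i"
  obtain j where j: "j \<in> I" "is_complete_block (K j)" using assms(4) by blast
  have bt: "bot \<in> ?U" "top \<in> ?U" using j unfolding is_complete_block_def by auto
  have cl: "x \<in> ?U" if k: "k \<in> ?U" "k \<notin> {bot, top}" and kx: "k \<le> x \<or> x \<le> k" for k x
  proof -
    from k(1) obtain i where i: "i \<in> I" "k \<in> K i" by blast
    show "x \<in> ?U"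
    proof (cases "x \<in> {bot, top}")
      case True then show ?thesis using bt by auto
    next
      case False
      have blk: "\<forall>k \<in> K i - {bot, top}. ({x. k \<le> x} \<union> {x. x \<le> k}) - {bot, top} \<subseteq> K i"
        using i(1) assms(3) unfolding is_block_def by simp
      have "k \<in> K i - {bot, top}" using i k by simp
      with blk have "({x. k \<le> x} \<union> {x. x \<le> k}) - {bot, top} \<subseteq> K i" by blast
      moreover have "x \<in> ({x. k \<le> x} \<union> {x. x \<le> k}) - {bot, top}" using False kx by simp
      ultimately have "x \<in> K i" by (rule subsetD)
      then show ?thesis using i by blast
    qed
  qed
  have inf_in: "inf x y \<in> ?U" if "x \<in> ?U" "y \<in> ?U" for x y
  proof (cases "x = bot")
    case True then show ?thesis using bt by simp
  next
    case F1: False show ?thesis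
    proof (cases "x = top")
      case True then show ?thesis using that by simp
    next
      case False then show ?thesis using cl[OF that(1), of "inf x y"] F1 by simp
    qed
  qed
  have sup_in: "sup x y \<in> ?U" if "x \<in> ?U" "y \<in> ?U" for x y
  proof (cases "x = bot")
    case True then show ?thesis using that by simp
  next
    case F1: False show ?thesis
    proof (cases "x = top")
      case True then show ?thesis using bt by simp
    next
      case False then show ?thesis using cl[OF that(1), of "sup x y"] F1 by simp
    qed
  qed
  have ne: "?U - {bot, top} \<noteq> {}"
  proof -
    have "K j - {bot, top} \<noteq> {}" using j unfolding is_complete_block_def is_block_def by simp
    then show ?thesis using j(1) by blast
  qed
  have sl: "sublattice ?U" unfolding sublattice_def using inf_in sup_in by simp
  have c2: "\<forall>k \<in> ?U - {bot, top}. ({x. k \<le> x} \<union> {x. x \<le> k}) - {bot, top} \<subseteq> ?U"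
  proof (intro ballI subsetI)
    fix k x assume a1: "k \<in> ?U - {bot, top}" and a2: "x \<in> ({x. k \<le> x} \<union> {x. x \<le> k}) - {bot, top}"
    from a1 have "k \<in> ?U" "k \<notin> {bot, top}" by simp_all
    moreover from a2 have "k \<le> x \<or> x \<le> k" by simp
    ultimately show "x \<in> ?U" by (rule cl)
  qed
  show ?thesis unfolding is_complete_block_def is_block_def
    using sl ne bt assms(5) c2 by simp
qed

end
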